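(* Let $\Phi=(V,C)$ be a CNF formula and $\theta\ge0$. Introduce new variables $U=\{u_c: c\in C\}$ and the CNF formula $\Phi'=(V\cup U,C')$ with $C'=\{u_c\lor c: c\in C\}$. Let $\mathcal P$ be the product distribution on $\{0,1\}^{V\cup U}$ in which each $v\in V$ is uniform on $\{0,1\}$ and each $u\in U$ equals $1$ with probability $\exp(-\theta)$ and $0$ with probability $1-\exp(-\theta)$. For $c'\in C'$ let $\mathcal B_{c'}$ be the event that $c'$ is not satisfied. Then for every $X\in\{0,1\}^V$, $$\Pr_{\mathcal P}\Big[\text{each } v\in V \text{ takes the value } X(v)\ \Big|\ \bigwedge_{c'\in C'}\overline{\mathcal B_{c'}}\Big]=\mu_\theta(X),$$ where $\mu_\theta(X)=\frac{\exp(-\theta|F(X)|)}{\sum_{Y\in\{0,1\}^V}\exp(-\theta|F(Y)|)}$ and $F(X)\subseteq C$ is the set of clauses of $\Phi$ not satisfied by $X$.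
   Context: The clause $u_c\lor c$ is satisfied by an assignment if $u_c=1$ or the clause $c$ is satisfied. *)

theory Defs
  imports "HOL-Probability.Probability"
begin

type_synonym 'v clause = "('v \<times> bool) set"

definition cnf_formula :: "'v set \<Rightarrow> 'v clause set \<Rightarrow> bool" where
  "cnf_formula V C \<longleftrightarrow> finite V \<and> finite C \<and>
     (\<forall>c\<in>C. finite c \<and> fst ` c \<subseteq> V)"

definition clause_sat :: "('v \<Rightarrow> bool) \<Rightarrow> 'v clause \<Rightarrow> bool" where
  "clause_sat X c \<longleftrightarrow> (\<exists>(v, b)\<in>c. X v = b)"

definition unsat_clauses :: "'v clause set \<Rightarrow> ('v \<Rightarrow> bool) \<Rightarrow> 'v clause set" where
  "unsat_clauses C X = {c \<in> C. \<not> clause_sat X c}"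

definition mu_theta :: "'v set \<Rightarrow> 'v clause set \<Rightarrow> real \<Rightarrow> ('v \<Rightarrow> bool) \<Rightarrow> real" where
  "mu_theta V C \<theta> X =
     exp (- \<theta> * real (card (unsat_clauses C X))) /
     (\<Sum>Y\<in>V \<rightarrow>\<^sub>E (UNIV :: bool set). exp (- \<theta> * real (card (unsat_clauses C Y))))"

text \<open>The new formula Phi' over variables V \<union> U, where u_c is represented by Inr c
  and the original variable v by Inl v. The clause u_c \<or> c.\<close>
definition ext_clause :: "'v clause \<Rightarrow> ('v + 'v clause) clause" where
  "ext_clause c = insert (Inr c, True) ((\<lambda>(v, b). (Inl v, b)) ` c)"

definition ext_vars :: "'v set \<Rightarrow> 'v clause set \<Rightarrow> ('v + 'v clause) set" where
  "ext_vars V C = Inl ` V \<union> Inr ` C"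

definition ext_clauses :: "'v clause set \<Rightarrow> ('v + 'v clause) clause set" where
  "ext_clauses C = ext_clause ` C"

text \<open>The product distribution P on {0,1}^(V \<union> U) (True = 1); outside V \<union> U
  assignments are fixed to False.\<close>
definition prod_dist :: "'v set \<Rightarrow> 'v clause set \<Rightarrow> real \<Rightarrow> (('v + 'v clause) \<Rightarrow> bool) pmf" where
  "prod_dist V C \<theta> = Pi_pmf (ext_vars V C) False
     (\<lambda>x. case x of Inl v \<Rightarrow> bernoulli_pmf (1/2) | Inr c \<Rightarrow> bernoulli_pmf (exp (- \<theta>)))"

end

theory Submission
  imports Defs
begin

definition BY :: "'v clause set \<Rightarrow> ('v \<Rightarrow> bool) \<Rightarrow> ('v + 'v clause) \<Rightarrow> bool set" where
  "BY C Y x = (case x of Inl v \<Rightarrow> {Y v} | Inr c \<Rightarrow> (if clause_sat Y c then UNIV else {True}))"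

lemma event_eq:
  assumes "cnf_formula V C"
  shows "{\<sigma>. \<forall>v\<in>V. \<sigma> (Inl v) = Y v} \<inter> {\<sigma>. \<forall>c'\<in>ext_clauses C. clause_sat \<sigma> c'}
         = Pi (ext_vars V C) (BY C Y)"
proof (intro equalityI subsetI)
  fix \<sigma> assume s: "\<sigma> \<in> {\<sigma>. \<forall>v\<in>V. \<sigma> (Inl v) = Y v} \<inter> {\<sigma>. \<forall>c'\<in>ext_clauses C. clause_sat \<sigma> c'}"
  show "\<sigma> \<in> Pi (ext_vars V C) (BY C Y)"
  proof
    fix x assume x: "x \<in> ext_vars V C"
    show "\<sigma> x \<in> BY C Y x"
    proof (cases x)
      case (Inl v)
      then show ?thesis using s x by (auto simp: BY_def ext_vars_def)
    next
      case (Inr c)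
      then have c: "c \<in> C" using x by (auto simp: ext_vars_def)
      have sub: "fst ` c \<subseteq> V" using assms c by (auto simp: cnf_formula_def)
      have "clause_sat \<sigma> (ext_clause c)" using s c by (auto simp: ext_clauses_def)
      then obtain w b where wb: "(w, b) \<in> ext_clause c" "\<sigma> w = b"
        unfolding clause_sat_def by blast
      have "\<sigma> (Inr c) \<or> clause_sat Y c"
      proof (cases "(w, b) = (Inr c, True)")
        case True then show ?thesis using wb by simp
      next
        case False
        then obtain v where v: "(v, b) \<in> c" "w = Inl v" using wb(1) unfolding ext_clause_def by auto
        then have "v \<in> V" using sub by force
        then have "Y v = b" using s wb(2) v(2) by auto
        then show ?thesis using v(1) unfolding clause_sat_def by blast
      qed
      then show ?thesis using Inr by (auto simp: BY_def)
    qed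
  qed
next
  fix \<sigma> assume s: "\<sigma> \<in> Pi (ext_vars V C) (BY C Y)"
  have a: "\<forall>v\<in>V. \<sigma> (Inl v) = Y v"
  proof
    fix v assume "v \<in> V"
    then have "\<sigma> (Inl v) \<in> BY C Y (Inl v)" using s by (auto simp: ext_vars_def)
    then show "\<sigma> (Inl v) = Y v" by (simp add: BY_def)
  qed
  have "\<forall>c'\<in>ext_clauses C. clause_sat \<sigma> c'"
  proof
    fix c' assume "c' \<in> ext_clauses C"
    then obtain c where c: "c \<in> C" and c': "c' = ext_clause c" by (auto simp: ext_clauses_def)
    have sub: "fst ` c \<subseteq> V" using assms c by (auto simp: cnf_formula_def)
    have "\<sigma> (Inr c) \<in> BY C Y (Inr c)" using s c by (auto simp: ext_vars_def)
    then have "\<sigma> (Inr c) \<or> clause_sat Y c" by (auto simp: BY_def split: if_splits)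
    then show "clause_sat \<sigma> c'"
    proof
      assume "\<sigma> (Inr c)"
      then show ?thesis unfolding c' clause_sat_def ext_clause_def by blast
    next
      assume "clause_sat Y c"
      then obtain v b where vb: "(v, b) \<in> c" "Y v = b" unfolding clause_sat_def by blast
      then have "v \<in> V" using sub by force
      then have "\<sigma> (Inl v) = b" using a vb(2) by auto
      moreover have "(Inl v, b) \<in> ext_clause c" using vb(1) unfolding ext_clause_def by force
      ultimately show ?thesis unfolding c' clause_sat_def by blast
    qed
  qed
  then show "\<sigma> \<in> {\<sigma>. \<forall>v\<in>V. \<sigma> (Inl v) = Y v} \<inter> {\<sigma>. \<forall>c'\<in>ext_clauses C. clause_sat \<sigma> c'}"
    using a by auto
qed

lemma prob_event:
  assumes "cnf_formula V C" "\<theta> \<ge> 0"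
  shows "measure_pmf.prob (prod_dist V C \<theta>)
     ({\<sigma>. \<forall>v\<in>V. \<sigma> (Inl v) = Y v} \<inter> {\<sigma>. \<forall>c'\<in>ext_clauses C. clause_sat \<sigma> c'})
     = (1/2) ^ card V * exp (- \<theta> * real (card (unsat_clauses C Y)))"
proof -
  have fV: "finite V" and fC: "finite C" using assms by (auto simp: cnf_formula_def)
  let ?p = "\<lambda>x. case x of Inl v \<Rightarrow> bernoulli_pmf (1/2) | Inr c \<Rightarrow> bernoulli_pmf (exp (- \<theta>))"
  have e0: "0 \<le> exp (- \<theta>)" and e1: "exp (- \<theta>) \<le> 1" using assms by auto
  have fin: "finite (ext_vars V C)" using fV fC by (simp add: ext_vars_def)
  have s1: "measure_pmf.prob (prod_dist V C \<theta>)
     ({\<sigma>. \<forall>v\<in>V. \<sigma> (Inl v) = Y v} \<inter> {\<sigma>. \<forall>c'\<in>ext_clauses C. clause_sat \<sigma> c'})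
     = (\<Prod>x\<in>ext_vars V C. measure_pmf.prob (?p x) (BY C Y x))"
    unfolding event_eq[OF assms(1)] prod_dist_def by (rule measure_Pi_pmf_Pi[OF fin])
  have s2: "(\<Prod>x\<in>ext_vars V C. measure_pmf.prob (?p x) (BY C Y x)) =
       (\<Prod>x\<in>Inl ` V. measure_pmf.prob (?p x) (BY C Y x)) *
                  (\<Prod>x\<in>Inr ` C. measure_pmf.prob (?p x) (BY C Y x))"
    unfolding ext_vars_def using fV fC by (intro prod.union_disjoint) auto
  have s3: "(\<Prod>x\<in>Inl ` V. measure_pmf.prob (?p x) (BY C Y x)) = (1/2) ^ card V"
    by (subst prod.reindex) (auto simp: inj_on_def BY_def measure_pmf_single)
  have s4: "(\<Prod>x\<in>Inr ` C. measure_pmf.prob (?p x) (BY C Y x))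
      = (\<Prod>c\<in>C. if clause_sat Y c then 1 else exp (- \<theta>))"
    by (subst prod.reindex) (auto simp: inj_on_def BY_def measure_pmf_single pmf_bernoulli_True[OF e0 e1] intro!: prod.cong)
  have s5: "(\<Prod>c\<in>C. if clause_sat Y c then 1 else exp (- \<theta>)) = exp (- \<theta>) ^ card (unsat_clauses C Y)"
  proof -
    have "C \<inter> - {c. clause_sat Y c} = unsat_clauses C Y" by (auto simp: unsat_clauses_def)
    then show ?thesis using fC by (simp add: prod.If_cases)
  qed
  have s6: "exp (- \<theta>) ^ card (unsat_clauses C Y) = exp (- \<theta> * real (card (unsat_clauses C Y)))"
    by (simp add: exp_of_nat_mult[symmetric] mult.commute)
  show ?thesis unfolding s1 s2 s3 s4 s5 s6 ..
qed

theorem proposition7p9: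
  fixes V :: "'v set" and C :: "'v clause set" and \<theta> :: real and X :: "'v \<Rightarrow> bool"
  assumes "cnf_formula V C" and "\<theta> \<ge> 0"
  defines "Good \<equiv> {\<sigma>. \<forall>c'\<in>ext_clauses C. clause_sat \<sigma> c'}"
      and "Agree \<equiv> {\<sigma>. \<forall>v\<in>V. \<sigma> (Inl v) = X v}"
  shows "measure_pmf.prob (prod_dist V C \<theta>) (Agree \<inter> Good) /
           measure_pmf.prob (prod_dist V C \<theta>) Good = mu_theta V C \<theta> X"
proof -
  have fV: "finite V" using assms by (auto simp: cnf_formula_def)
  let ?S = "V \<rightarrow>\<^sub>E (UNIV :: bool set)"
  let ?E = "\<lambda>Y. {\<sigma>. \<forall>v\<in>V. \<sigma> (Inl v) = Y v} \<inter> Good"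
  let ?h = "(1/2::real) ^ card V"
  have G: "Good = (\<Union>Y\<in>?S. ?E Y)"
  proof (intro equalityI subsetI)
    fix \<sigma> assume s: "\<sigma> \<in> Good"
    have m: "restrict (\<sigma> \<circ> Inl) V \<in> ?S" by simp
    have "\<sigma> \<in> ?E (restrict (\<sigma> \<circ> Inl) V)" using s by simp
    then show "\<sigma> \<in> (\<Union>Y\<in>?S. ?E Y)" using m by (rule UN_I[rotated])
  next
    fix \<sigma> assume "\<sigma> \<in> (\<Union>Y\<in>?S. ?E Y)"
    then show "\<sigma> \<in> Good" by blast
  qed
  have disj: "disjoint_family_on ?E ?S"
    unfolding disjoint_family_on_def
  proof (intro ballI impI)
    fix Y1 Y2 assume a: "Y1 \<in> ?S" "Y2 \<in> ?S" "Y1 \<noteq> Y2"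
    have "\<not> (\<forall>i\<in>V. Y1 i = Y2 i)" using PiE_ext[OF a(1) a(2)] a(3) by blast
    then obtain v where v: "v \<in> V" "Y1 v \<noteq> Y2 v" by blast
    show "?E Y1 \<inter> ?E Y2 = {}"
    proof (rule equals0I)
      fix \<sigma> assume "\<sigma> \<in> ?E Y1 \<inter> ?E Y2"
      then have "\<sigma> (Inl v) = Y1 v" "\<sigma> (Inl v) = Y2 v" using v(1) by blast+
      then show False using v(2) by simp
    qed
  qed
  have "measure_pmf.prob (prod_dist V C \<theta>) Good = (\<Sum>Y\<in>?S. measure_pmf.prob (prod_dist V C \<theta>) (?E Y))"
  proof -
    have "measure_pmf.prob (prod_dist V C \<theta>) Good = measure_pmf.prob (prod_dist V C \<theta>) (\<Union>Y\<in>?S. ?E Y)"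
      by (rule arg_cong[OF G])
    also have "\<dots> = (\<Sum>Y\<in>?S. measure_pmf.prob (prod_dist V C \<theta>) (?E Y))"
      by (rule measure_pmf.finite_measure_finite_Union) (use fV disj in \<open>auto intro: finite_PiE\<close>)
    finally show ?thesis .
  qed
  also have "\<dots> = (\<Sum>Y\<in>?S. ?h * exp (- \<theta> * real (card (unsat_clauses C Y))))"
    using prob_event[OF assms(1,2)] unfolding Good_def by simp
  also have "\<dots> = ?h * (\<Sum>Y\<in>?S. exp (- \<theta> * real (card (unsat_clauses C Y))))"
    by (simp add: sum_distrib_left)
  finally have den: "measure_pmf.prob (prod_dist V C \<theta>) Good = ?h * (\<Sum>Y\<in>?S. exp (- \<theta> * real (card (unsat_clauses C Y))))" .
  have num: "measure_pmf.prob (prod_dist V C \<theta>) (Agree \<inter> Good) = ?h * exp (- \<theta> * real (card (unsat_clauses C X)))"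
    using prob_event[OF assms(1,2)] unfolding Good_def Agree_def by simp
  show ?thesis unfolding num den mu_theta_def by simp
qed

end
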